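(* Let $n\ge 3$ and let $S_n$ be a complete sun graph on $2n$ vertices. Then the sparing number of $S_n$ is $\varphi(S_n)=\frac{1}{2}(n^2-3n+6)$.
   Context: An $n$-sun ($n\ge3$) is a graph on $2n$ vertices whose vertex set is partitioned into $U=\{u_1,\dots,u_n\}$ and $W=\{w_1,\dots,w_n\}$, where $W$ is an independent set and $w_j$ is adjacent to $u_i$ if and only if $j=i$ or $j\equiv i+1 \pmod n$. A complete sun is an $n$-sun in which the induced subgraph on $U$ is complete. Let $\mathbb{N}_0$ be the set of non-negative integers; for $A,B\subseteq\mathbb{N}_0$, $A+B=\{a+b:a\in A,b\in B\}$. An integer additive set-indexer (IASI) of a graph $G$ is an injective map $f:V(G)\to\mathcal{P}(\mathbb{N}_0)$ such that $f^+:E(G)\to\mathcal{P}(\mathbb{N}_0)$, $f^+(uv)=f(u)+f(v)$, is injective. A weak IASI is an IASI with $|f^+(uv)|=\max(|f(u)|,|f(v)|)$ for every edge $uv$. An edge $e$ is mono-indexed if $|f^+(e)|=1$. The sparing number $\varphi(G)$ is the minimum number of mono-indexed edges over all weak IASIs of $G$. *)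

theory Defs
  imports Complex_Main
begin

text \<open>A (simple, undirected) graph is given by a vertex set V and an edge set E,
  each edge being a two-element set of vertices.\<close>

definition sumset :: "nat set \<Rightarrow> nat set \<Rightarrow> nat set" where
  "sumset A B = {a + b | a b. a \<in> A \<and> b \<in> B}"

definition edge_label :: "('a \<Rightarrow> nat set) \<Rightarrow> 'a set \<Rightarrow> nat set" where
  "edge_label f e = (THE S. \<exists>u v. e = {u, v} \<and> u \<noteq> v \<and> S = sumset (f u) (f v))"

definition IASI :: "'a set \<Rightarrow> 'a set set \<Rightarrow> ('a \<Rightarrow> nat set) \<Rightarrow> bool" where
  "IASI V E f \<longleftrightarrow> (\<forall>v\<in>V. finite (f v) \<and> f v \<noteq> {}) \<and> inj_on f V \<and> inj_on (edge_label f) E"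

definition weak_IASI :: "'a set \<Rightarrow> 'a set set \<Rightarrow> ('a \<Rightarrow> nat set) \<Rightarrow> bool" where
  "weak_IASI V E f \<longleftrightarrow> IASI V E f \<and>
     (\<forall>u v. {u, v} \<in> E \<longrightarrow> u \<noteq> v \<longrightarrow> card (edge_label f {u, v}) = max (card (f u)) (card (f v)))"

definition mono_indexed_edges :: "'a set set \<Rightarrow> ('a \<Rightarrow> nat set) \<Rightarrow> 'a set set" where
  "mono_indexed_edges E f = {e \<in> E. card (edge_label f e) = 1}"

definition sparing_number :: "'a set \<Rightarrow> 'a set set \<Rightarrow> nat" where
  "sparing_number V E = (LEAST k. \<exists>f. weak_IASI V E f \<and> card (mono_indexed_edges E f) = k)"

text \<open>The complete sun on 2n vertices: u_i = Inl i, w_j = Inr j (0 \<le> i,j < n);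
  U is a clique, W is independent, w_j ~ u_i iff j = i or j = (i+1) mod n.\<close>
definition complete_sun_V :: "nat \<Rightarrow> (nat + nat) set" where
  "complete_sun_V n = Inl ` {..<n} \<union> Inr ` {..<n}"

definition complete_sun_E :: "nat \<Rightarrow> (nat + nat) set set" where
  "complete_sun_E n =
     {{Inl i, Inl j} | i j. i < n \<and> j < n \<and> i \<noteq> j} \<union>
     {{Inl i, Inr j} | i j. i < n \<and> j < n \<and> (j = i \<or> j = Suc i mod n)}"

end

theory Submission
  imports Defs
begin

lemma sumset_commute: "sumset A B = sumset B A"
  by (auto simp: sumset_def) (metis add.commute)+

lemma edge_label_eq: "u \<noteq> v \<Longrightarrow> edge_label f {u,v} = sumset (f u) (f v)"
  unfolding edge_label_def
  apply (rule the_equality)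
   apply blast
  apply (auto simp: doubleton_eq_iff sumset_commute)
  done

lemma sumset_single: "sumset {a} B = (\<lambda>b. a+b) ` B"
  by (auto simp: sumset_def)

lemma sumset_img: "sumset A B = (\<lambda>(a,b). a+b) ` (A \<times> B)"
  by (auto simp: sumset_def)

lemma finite_sumset: "finite A \<Longrightarrow> finite B \<Longrightarrow> finite (sumset A B)"
  by (simp add: sumset_img)

lemma card_sumset_ge:
  assumes "finite A" "finite B" "b \<in> B"
  shows "card A \<le> card (sumset A B)"
proof -
  have "(\<lambda>a. a + b) ` A \<subseteq> sumset A B" using assms by (auto simp: sumset_def)
  moreover have "card ((\<lambda>a. a + b) ` A) = card A" by (simp add: card_image)
  ultimately show ?thesis using finite_sumset[OF assms(1,2)] by (metis card_mono)
qed

lemma card_sumset_gt: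
  assumes "finite A" "finite B" "A \<noteq> {}" "card B \<ge> 2"
  shows "card A + 1 \<le> card (sumset A B)"
proof -
  have Bne: "B \<noteq> {}" using assms by auto
  define b0 where "b0 = Min B"
  define b1 where "b1 = Max B"
  define a1 where "a1 = Max A"
  have b0B: "b0 \<in> B" using Bne assms by (simp add: b0_def)
  have b1B: "b1 \<in> B" using Bne assms by (simp add: b1_def)
  have a1A: "a1 \<in> A" using assms by (simp add: a1_def)
  have "b0 < b1"
  proof (rule ccontr)
    assume "\<not> b0 < b1"
    have "x = b0" if "x \<in> B" for x
    proof -
      have "b0 \<le> x" unfolding b0_def using that assms by simp
      moreover have "x \<le> b1" unfolding b1_def using that assms by simp
      ultimately show ?thesis using \<open>\<not> b0 < b1\<close> by simp
    qed
    hence "B \<subseteq> {b0}" by auto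
    hence "card B \<le> card {b0}" by (intro card_mono) auto
    hence "card B \<le> 1" by simp
    thus False using assms by simp
  qed
  have sub: "insert (a1 + b1) ((\<lambda>a. a + b0) ` A) \<subseteq> sumset A B"
    using b0B b1B a1A by (auto simp: sumset_def)
  have nin: "a1 + b1 \<notin> (\<lambda>a. a + b0) ` A"
  proof
    assume "a1 + b1 \<in> (\<lambda>a. a + b0) ` A"
    then obtain a where "a \<in> A" "a1 + b1 = a + b0" by auto
    moreover have "a \<le> a1" using \<open>a \<in> A\<close> assms by (simp add: a1_def)
    ultimately show False using \<open>b0 < b1\<close> by linarith
  qed
  have "card (insert (a1 + b1) ((\<lambda>a. a + b0) ` A)) = card A + 1"
    using nin assms by (simp add: card_image)
  thus ?thesis using sub finite_sumset[OF assms(1,2)] by (metis card_mono)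
qed

lemma card_ge2: "finite A \<Longrightarrow> A \<noteq> {} \<Longrightarrow> card A \<noteq> 1 \<Longrightarrow> card A \<ge> 2"
proof -
  assume "finite A" "A \<noteq> {}" "card A \<noteq> 1"
  hence "card A > 0" by (simp add: card_gt_0_iff)
  thus ?thesis using \<open>card A \<noteq> 1\<close> by linarith
qed

lemma weak_edge:
  assumes "weak_IASI V E f" "{u,v} \<in> E" "u \<noteq> v" "u \<in> V" "v \<in> V"
  shows "card (f u) = 1 \<or> card (f v) = 1"
proof (rule ccontr)
  assume H: "\<not> (card (f u) = 1 \<or> card (f v) = 1)"
  have fu: "finite (f u)" "f u \<noteq> {}" and fv: "finite (f v)" "f v \<noteq> {}"
    using assms(1,4,5) unfolding weak_IASI_def IASI_def by auto
  have c2: "card (f u) \<ge> 2" "card (f v) \<ge> 2" using H fu fv card_ge2 by auto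
  have "card (f u) + 1 \<le> card (sumset (f u) (f v))"
    using card_sumset_gt[OF fu(1) fv(1) fu(2) c2(2)] .
  moreover have "card (f v) + 1 \<le> card (sumset (f v) (f u))"
    using card_sumset_gt[OF fv(1) fu(1) fv(2) c2(1)] .
  moreover have "card (edge_label f {u,v}) = max (card (f u)) (card (f v))"
    using assms(1,2,3) unfolding weak_IASI_def by blast
  ultimately show False using edge_label_eq[OF assms(3), of f] sumset_commute[of "f u" "f v"]
    by (simp add: max_def split: if_splits)
qed

lemma pow2_inj:
  assumes "a < b" "c < d" "(2::nat)^a + 2^b = 2^c + 2^d"
  shows "a = c \<and> b = d"
proof -
  have lt: "(2::nat)^x + 2^y < 2^z" if "x < y" "y < z" for x y z
  proof -
    have "(2::nat)^x + 2^y < 2^y + 2^y" using that by simp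
    also have "\<dots> = 2^Suc y" by simp
    also have "\<dots> \<le> 2^z" using that by (intro power_increasing) auto
    finally show ?thesis .
  qed
  have "b = d"
  proof (rule ccontr)
    assume "b \<noteq> d"
    hence "b < d \<or> d < b" by auto
    thus False
    proof
      assume "b < d" thus False using lt[OF assms(1)] assms(3) by (metis add_lessD1 add.commute less_not_refl)
    next
      assume "d < b" thus False using lt[OF assms(2)] assms(3) by (metis add_lessD1 add.commute less_not_refl)
    qed
  qed
  thus ?thesis using assms(3) by simp
qed

lemma pow2_inj':
  assumes "a \<noteq> b" "c \<noteq> d" "(2::nat)^a + 2^b = 2^c + 2^d"
  shows "{a,b} = {c,d}"
proof -
  consider "a < b" | "b < a" using assms by linarith
  thus ?thesis
  proof cases
    case 1
    consider "c < d" | "d < c" using assms by linarith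
    thus ?thesis using pow2_inj[OF 1] assms(3) by cases (auto simp: add.commute)
  next
    case 2
    consider "c < d" | "d < c" using assms by linarith
    thus ?thesis using pow2_inj[OF 2] assms(3) by cases (auto simp: add.commute)
  qed
qed


lemma sunE_cases:
  assumes "e \<in> complete_sun_E n"
  shows "(\<exists>i j. i < n \<and> j < n \<and> i \<noteq> j \<and> e = {Inl i, Inl j}) \<or>
         (\<exists>i j. i < n \<and> j < n \<and> (j = i \<or> j = Suc i mod n) \<and> e = {Inl i, Inr j})"
  using assms unfolding complete_sun_E_def by blast

lemma sunE_LL: "i < n \<Longrightarrow> j < n \<Longrightarrow> i \<noteq> j \<Longrightarrow> {Inl i, Inl j} \<in> complete_sun_E n"
  unfolding complete_sun_E_def by blast

lemma sunE_LR: "i < n \<Longrightarrow> j < n \<Longrightarrow> j = i \<or> j = Suc i mod n \<Longrightarrow> {Inl i, Inr j} \<in> complete_sun_E n"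
  unfolding complete_sun_E_def by blast

lemma sunV: "Inl i \<in> complete_sun_V n \<longleftrightarrow> i < n" "Inr i \<in> complete_sun_V n \<longleftrightarrow> i < n"
  unfolding complete_sun_V_def by auto

lemma sunE_sub: "e \<in> complete_sun_E n \<Longrightarrow> e \<subseteq> complete_sun_V n"
  using sunE_cases[of e n] by (auto simp: sunV)

lemma finite_sunE: "finite (complete_sun_E n)"
proof -
  have "complete_sun_E n \<subseteq> Pow (complete_sun_V n)" using sunE_sub by blast
  moreover have "finite (complete_sun_V n)" unfolding complete_sun_V_def by simp
  ultimately show ?thesis by (meson finite_Pow_iff finite_subset)
qed

lemma both_single_mono:
  assumes "{x,y} \<in> E" "x \<noteq> y" "card (f x) = 1" "card (f y) = 1"
  shows "{x,y} \<in> mono_indexed_edges E f"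
proof -
  obtain a b where "f x = {a}" "f y = {b}" using assms by (meson card_1_singletonE)
  hence "edge_label f {x,y} = {a+b}" using edge_label_eq[OF assms(2)] by (simp add: sumset_single)
  thus ?thesis using assms(1) unfolding mono_indexed_edges_def by simp
qed

definition P2 :: "nat set \<Rightarrow> (nat + nat) set set" where
  "P2 A = {e. e \<subseteq> Inl ` A \<and> card e = 2}"

lemma card_P2: "finite A \<Longrightarrow> card (P2 A) = card A choose 2"
  unfolding P2_def using n_subsets[of "Inl ` A" 2] by (simp add: card_image)

lemma P2_mem: "e \<in> P2 A \<Longrightarrow> \<exists>a b. a \<in> A \<and> b \<in> A \<and> a \<noteq> b \<and> e = {Inl a, Inl b}"
  unfolding P2_def card_2_iff by blast

lemma choose2_ge: "m \<ge> 2 \<Longrightarrow> (m choose 2) + 2 \<le> Suc m choose 2"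
proof -
  assume "m \<ge> 2"
  have "Suc m choose Suc 1 = (m choose 1) + (m choose Suc 1)" by (rule binomial_Suc_Suc)
  hence "Suc m choose 2 = m + (m choose 2)" by (simp add: numeral_2_eq_2)
  thus ?thesis using \<open>m \<ge> 2\<close> by simp
qed

lemma lower_bound:
  assumes n3: "n \<ge> 3" and W: "weak_IASI (complete_sun_V n) (complete_sun_E n) f"
  shows "((n - 1) choose 2) + 2 \<le> card (mono_indexed_edges (complete_sun_E n) f)"
proof -
  let ?E = "complete_sun_E n" and ?V = "complete_sun_V n"
  let ?M = "mono_indexed_edges ?E f"
  define A where "A = {i. i < n \<and> card (f (Inl i)) = 1}"
  have finM: "finite ?M" using finite_sunE unfolding mono_indexed_edges_def by simp
  have PM: "P2 B \<subseteq> ?M" if "B \<subseteq> A" for B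
  proof
    fix e assume "e \<in> P2 B"
    then obtain a b where ab: "a \<in> B" "b \<in> B" "a \<noteq> b" "e = {Inl a, Inl b}" using P2_mem by blast
    hence "a \<in> A" "b \<in> A" using that by auto
    have "{Inl a, Inl b} \<in> ?M"
      by (rule both_single_mono) (use ab \<open>a \<in> A\<close> \<open>b \<in> A\<close> in \<open>auto simp: A_def intro: sunE_LL\<close>)
    thus "e \<in> ?M" using ab by simp
  qed
  have key: "j \<in> A" if "i < n" "j < n" "i \<noteq> j" "i \<notin> A" for i j
    using weak_edge[OF W sunE_LL[OF that(1-3)]] that by (auto simp: A_def sunV)
  obtain m where m: "n = Suc m" using n3 by (cases n) auto
  show ?thesis
  proof (cases "A = {..<n}")
    case True
    have "card (P2 {..<n}) = n choose 2" by (simp add: card_P2)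
    moreover have "card (P2 {..<n}) \<le> card ?M" using PM[of "{..<n}"] True finM by (intro card_mono) auto
    ultimately have "n choose 2 \<le> card ?M" by simp
    thus ?thesis using choose2_ge[of m] m n3 by simp
  next
    case False
    then obtain i where i: "i < n" "i \<notin> A" unfolding A_def by auto
    have AA: "A = {..<n} - {i}" using key[OF i(1) _ _ i(2)] i unfolding A_def by auto
    have cA: "card A = n - 1" using AA i by simp
    define i' where "i' = (i + n - 1) mod n"
    define j' where "j' = Suc i mod n"
    have i'n1: "i' < n" using n3 by (simp add: i'_def)
    have i'n2: "i' \<noteq> i \<and> i = Suc i' mod n"
    proof (cases "i = 0")
      case True
      hence "i' = n - 1" using n3 by (simp add: i'_def)
      thus ?thesis using True n3 by auto
    next
      case False
      have e: "i + n - 1 = (i - 1) + n" using False by simp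
      have "i' = ((i - 1) + n) mod n" unfolding i'_def e ..
      also have "\<dots> = (i - 1) mod n" by (rule mod_add_self2)
      also have "\<dots> = i - 1" using i by simp
      finally have "i' = i - 1" .
      thus ?thesis using False i by auto
    qed
    have i'n: "i' < n" "i' \<noteq> i" and si': "i = Suc i' mod n" using i'n1 i'n2 by auto
    have j'n: "j' < n" "j' \<noteq> i" unfolding j'_def using i n3
      by (auto simp: mod_Suc)
    have Ri: "card (f (Inr i)) = 1"
      using weak_edge[OF W sunE_LR[OF i(1) i(1)]] i by (auto simp: A_def sunV)
    have Rj: "card (f (Inr j')) = 1"
      using weak_edge[OF W sunE_LR[OF i(1) j'n(1)]] i by (auto simp: A_def sunV j'_def)
    have Li': "card (f (Inl i')) = 1" using key[OF i(1) i'n(1) i'n(2)[symmetric] i(2)] by (simp add: A_def)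
    have Lj': "card (f (Inl j')) = 1" using key[OF i(1) j'n(1) j'n(2)[symmetric] i(2)] by (simp add: A_def)
    define e1 where "e1 = {Inl i', Inr i}"
    define e2 where "e2 = {Inl j', Inr j'}"
    have e1M: "e1 \<in> ?M" unfolding e1_def
      by (rule both_single_mono[OF sunE_LR[OF i'n(1) i(1)]]) (use si' Li' Ri in auto)
    have e2M: "e2 \<in> ?M" unfolding e2_def
      by (rule both_single_mono[OF sunE_LR[OF j'n(1) j'n(1)]]) (use Lj' Rj in auto)
    have ne: "e1 \<noteq> e2" using j'n unfolding e1_def e2_def by (auto simp: doubleton_eq_iff)
    have nP: "e1 \<notin> P2 A" "e2 \<notin> P2 A" unfolding e1_def e2_def P2_def by auto
    have sub: "insert e1 (insert e2 (P2 A)) \<subseteq> ?M" using PM[of A] e1M e2M by auto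
    have finP: "finite (P2 A)" using PM[of A] finM finite_subset by blast
    have "card (insert e1 (insert e2 (P2 A))) = card (P2 A) + 2"
      using ne nP finP by simp
    also have "card (P2 A) = (n - 1) choose 2" using cA AA by (simp add: card_P2)
    finally have "card (insert e1 (insert e2 (P2 A))) = ((n - 1) choose 2) + 2" .
    moreover have "card (insert e1 (insert e2 (P2 A))) \<le> card ?M" using card_mono[OF finM sub] .
    ultimately show ?thesis by simp
  qed
qed


section \<open>Construction\<close>

fun qv :: "nat + nat \<Rightarrow> nat" where
  "qv (Inl i) = 2 * i"
| "qv (Inr j) = Suc (2 * j)"

lemma inj_qv: "inj qv"
proof (rule injI)
  fix x y assume "qv x = qv y"
  thus "x = y" by (cases x; cases y; simp; presburger)
qed

definition pv :: "nat + nat \<Rightarrow> nat" where "pv v = 2 ^ qv v"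

definition nsv :: "nat + nat \<Rightarrow> bool" where
  "nsv v = (v = Inl 0 \<or> (\<exists>j. j \<ge> 2 \<and> v = Inr j))"

lemma nsv_simps [simp]: "nsv (Inl i) \<longleftrightarrow> i = 0" "nsv (Inr j) \<longleftrightarrow> j \<ge> 2"
  unfolding nsv_def by auto

definition fc :: "nat + nat \<Rightarrow> nat set" where
  "fc v = (if nsv v then {pv v, Suc (pv v)} else {pv v})"

lemma fc_fin: "finite (fc v)" "fc v \<noteq> {}"
  unfolding fc_def by auto

lemma Min_fc: "Min (fc v) = pv v"
  unfolding fc_def by (auto intro: Min_eqI)

lemma card_fc: "card (fc v) = (if nsv v then 2 else 1)"
  unfolding fc_def by auto

lemma Min_sumset:
  assumes "finite A" "finite B" "A \<noteq> {}" "B \<noteq> {}"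
  shows "Min (sumset A B) = Min A + Min B"
proof (rule Min_eqI)
  show "finite (sumset A B)" using assms by (simp add: finite_sumset)
  show "Min A + Min B \<le> y" if yS: "y \<in> sumset A B" for y
  proof -
    obtain a b where "y = a + b" "a \<in> A" "b \<in> B" using yS by (auto simp: sumset_def)
    moreover have "Min A \<le> a" "Min B \<le> b" using assms calculation by simp_all
    ultimately show ?thesis by simp
  qed
  have "Min A \<in> A" "Min B \<in> B" using assms by simp_all
  thus "Min A + Min B \<in> sumset A B" unfolding sumset_def by blast
qed

lemma sun_edge_ns:
  assumes "{u,v} \<in> complete_sun_E n" "n \<ge> 3"
  shows "\<not> (nsv u \<and> nsv v)"
  using sunE_cases[OF assms(1)]
proof
  assume "\<exists>i j. i < n \<and> j < n \<and> i \<noteq> j \<and> {u, v} = {Inl i, Inl j}"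
  then obtain i j where "i \<noteq> j" "{u, v} = {Inl i, Inl j}" by blast
  thus ?thesis by (auto simp: doubleton_eq_iff)
next
  assume "\<exists>i j. i < n \<and> j < n \<and> (j = i \<or> j = Suc i mod n) \<and> {u, v} = {Inl i, Inr j}"
  then obtain i j where ij: "i < n" "j = i \<or> j = Suc i mod n" "{u, v} = {Inl i, Inr j}" by blast
  have "j < 2" if "i = 0"
  proof -
    have "Suc 0 mod n = 1" using assms(2) by simp
    thus ?thesis using ij(2) that by auto
  qed
  thus ?thesis using ij(3) by (auto simp: doubleton_eq_iff)
qed

lemma sun_edge_ne: "e \<in> complete_sun_E n \<Longrightarrow> \<exists>x y. x \<noteq> y \<and> e = {x,y}"
  using sunE_cases[of e n] by blast

lemma construction_weak:
  assumes n3: "n \<ge> 3"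
  shows "weak_IASI (complete_sun_V n) (complete_sun_E n) fc"
proof -
  have injp: "x = y" if "pv x = pv y" for x y
    using that inj_qv unfolding pv_def by (simp add: inj_eq)
  have lab: "Min (edge_label fc {x,y}) = pv x + pv y" if "x \<noteq> y" for x y
    using edge_label_eq[OF that, of fc] Min_sumset[OF fc_fin(1) fc_fin(1) fc_fin(2) fc_fin(2)] Min_fc
    by simp
  have inj1: "inj_on fc (complete_sun_V n)"
    by (rule inj_onI) (metis Min_fc injp)
  have inj2: "inj_on (edge_label fc) (complete_sun_E n)"
  proof (rule inj_onI)
    fix e1 e2 assume e1: "e1 \<in> complete_sun_E n" and e2: "e2 \<in> complete_sun_E n"
      and eq: "edge_label fc e1 = edge_label fc e2"
    obtain x1 y1 where xy1: "x1 \<noteq> y1" "e1 = {x1,y1}" using sun_edge_ne[OF e1] by blast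
    obtain x2 y2 where xy2: "x2 \<noteq> y2" "e2 = {x2,y2}" using sun_edge_ne[OF e2] by blast
    have "pv x1 + pv y1 = pv x2 + pv y2" using lab[OF xy1(1)] lab[OF xy2(1)] eq xy1 xy2 by simp
    hence "(2::nat) ^ qv x1 + 2 ^ qv y1 = 2 ^ qv x2 + 2 ^ qv y2" by (simp add: pv_def)
    moreover have "qv x1 \<noteq> qv y1" "qv x2 \<noteq> qv y2" using xy1 xy2 inj_qv by (auto simp: inj_eq)
    ultimately have "{qv x1, qv y1} = {qv x2, qv y2}" using pow2_inj' by blast
    hence "qv ` {x1,y1} = qv ` {x2,y2}" by simp
    hence "{x1,y1} = {x2,y2}" by (simp only: inj_image_eq_iff[OF inj_qv])
    thus "e1 = e2" using xy1 xy2 by simp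
  qed
  have card: "card (edge_label fc {u,v}) = max (card (fc u)) (card (fc v))"
    if "{u,v} \<in> complete_sun_E n" "u \<noteq> v" for u v
  proof -
    have ns: "\<not> (nsv u \<and> nsv v)" using sun_edge_ns[OF that(1) n3] .
    have c: "card (sumset {a} B) = card B" for a B by (simp add: sumset_single card_image)
    show ?thesis
    proof (cases "nsv u")
      case False
      hence "fc u = {pv u}" by (simp add: fc_def)
      thus ?thesis using edge_label_eq[OF that(2), of fc] c card_fc False by simp
    next
      case True
      hence "fc v = {pv v}" using ns by (simp add: fc_def)
      thus ?thesis using edge_label_eq[OF that(2), of fc] c card_fc True ns sumset_commute
        by (simp add: max_def)
    qed
  qed
  show ?thesis unfolding weak_IASI_def IASI_def using fc_fin inj1 inj2 card by blast
qed

lemma construction_count: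
  assumes n3: "n \<ge> 3"
  shows "card (mono_indexed_edges (complete_sun_E n) fc) \<le> ((n - 1) choose 2) + 2"
proof -
  define e1 :: "(nat + nat) set" where "e1 = {Inl (n - 1), Inr 0}"
  define e2 :: "(nat + nat) set" where "e2 = {Inl 1, Inr 1}"
  have sub: "mono_indexed_edges (complete_sun_E n) fc \<subseteq> insert e1 (insert e2 (P2 {1..<n}))"
  proof
    fix e assume "e \<in> mono_indexed_edges (complete_sun_E n) fc"
    hence eE: "e \<in> complete_sun_E n" and c1: "card (edge_label fc e) = 1"
      unfolding mono_indexed_edges_def by auto
    have nn: "\<not> nsv x \<and> \<not> nsv y" if "e = {x,y}" "x \<noteq> y" for x y
    proof -
      have l: "edge_label fc e = sumset (fc x) (fc y)" using edge_label_eq[OF that(2)] that(1) by simp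
      have px: "pv x \<in> fc x" and py: "pv y \<in> fc y" by (simp_all add: fc_def)
      have "card (fc x) \<le> card (sumset (fc x) (fc y))" by (rule card_sumset_ge[OF fc_fin(1) fc_fin(1) py])
      hence cx: "card (fc x) \<le> 1" using c1 l by simp
      have "card (fc y) \<le> card (sumset (fc y) (fc x))" by (rule card_sumset_ge[OF fc_fin(1) fc_fin(1) px])
      hence "card (fc y) \<le> 1" using c1 l sumset_commute[of "fc x" "fc y"] by simp
      thus ?thesis using cx by (simp add: card_fc split: if_splits)
    qed
    show "e \<in> insert e1 (insert e2 (P2 {1..<n}))"
      using sunE_cases[OF eE]
    proof
      assume "\<exists>i j. i < n \<and> j < n \<and> i \<noteq> j \<and> e = {Inl i, Inl j}"
      then obtain i j where ij: "i < n" "j < n" "i \<noteq> j" "e = {Inl i, Inl j}" by blast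
      have "i \<noteq> 0" "j \<noteq> 0" using nn[OF ij(4)] ij(3) by auto
      hence "e \<in> P2 {1..<n}" using ij unfolding P2_def by auto
      thus ?thesis by simp
    next
      assume "\<exists>i j. i < n \<and> j < n \<and> (j = i \<or> j = Suc i mod n) \<and> e = {Inl i, Inr j}"
      then obtain i j where ij: "i < n" "j < n" "j = i \<or> j = Suc i mod n" "e = {Inl i, Inr j}" by blast
      have i0: "i \<noteq> 0" and j2: "j < 2" using nn[OF ij(4)] by auto
      show ?thesis
      proof (cases "j = 0")
        case True
        hence "j \<noteq> i" using i0 by simp
        hence "Suc i mod n = 0" using ij(3) True by simp
        moreover have "Suc i \<le> n" using ij(1) by simp
        ultimately have "Suc i = n" by (cases "Suc i = n") auto
        hence "e = e1" using ij(4) True unfolding e1_def by auto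
        thus ?thesis by simp
      next
        case False
        hence j1: "j = 1" using j2 by simp
        have "i = 1"
        proof (rule ccontr)
          assume "i \<noteq> 1"
          hence "Suc i mod n = 1" using ij(3) j1 by simp
          moreover have "Suc i mod n = Suc i \<or> Suc i = n" using ij(1)
            by (cases "Suc i = n") auto
          ultimately show False using i0 n3 by auto
        qed
        hence "e = e2" using ij(4) j1 unfolding e2_def by auto
        thus ?thesis by simp
      qed
    qed
  qed
  have finP: "finite (P2 {1..<n})" unfolding P2_def
    by (rule finite_subset[of _ "Pow (Inl ` {1..<n})"]) auto
  have c1: "card (insert e1 (insert e2 (P2 {1..<n}))) \<le> Suc (card (insert e2 (P2 {1..<n})))"
    using finP by (simp add: card_insert_if)
  have c2: "card (insert e2 (P2 {1..<n})) \<le> Suc (card (P2 {1..<n}))"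
    using finP by (simp add: card_insert_if)
  have c3: "card (P2 {1..<n}) = (n - 1) choose 2" by (simp add: card_P2)
  have c4: "card (mono_indexed_edges (complete_sun_E n) fc) \<le> card (insert e1 (insert e2 (P2 {1..<n})))"
    using sub finP by (intro card_mono) auto
  show ?thesis using c1 c2 c3 c4 by linarith
qed


lemma choose2_Suc: "Suc m choose 2 = m + (m choose 2)"
proof -
  have "Suc m choose Suc 1 = (m choose 1) + (m choose Suc 1)" by (rule binomial_Suc_Suc)
  thus ?thesis by (simp add: numeral_2_eq_2)
qed

lemma choose2_double: "2 * (m choose 2) = m * (m - 1)"
proof (induction m)
  case 0 thus ?case by simp
next
  case (Suc m)
  show ?case unfolding choose2_Suc using Suc by (cases m) (auto simp: algebra_simps)
qed

lemma arith_final: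
  assumes "n \<ge> 3"
  shows "real (((n - 1) choose 2) + 2) = (real n ^ 2 - 3 * real n + 6) / 2"
proof -
  obtain m where m: "n = Suc m" using assms by (cases n) auto
  have "2 * (m choose 2) = m * (m - 1)" by (rule choose2_double)
  hence "real (2 * (m choose 2)) = real (m * (m - 1))" by (simp only:)
  moreover have "m \<ge> 1" using assms m by simp
  ultimately have "2 * real (m choose 2) = real m * (real m - 1)"
    by (simp add: of_nat_diff)
  thus ?thesis using m by (simp add: power2_eq_square algebra_simps)
qed

theorem theorem2p3:
  fixes n :: nat
  assumes "n \<ge> 3"
  shows "real (sparing_number (complete_sun_V n) (complete_sun_E n))
           = (real n ^ 2 - 3 * real n + 6) / 2"
proof -
  let ?k = "((n - 1) choose 2) + 2"
  have "sparing_number (complete_sun_V n) (complete_sun_E n) = ?k"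
    unfolding sparing_number_def
  proof (rule Least_equality)
    show "\<exists>f. weak_IASI (complete_sun_V n) (complete_sun_E n) f \<and>
             card (mono_indexed_edges (complete_sun_E n) f) = ?k"
      using construction_weak[OF assms] construction_count[OF assms]
        lower_bound[OF assms construction_weak[OF assms]] by (intro exI[of _ fc]) simp
    show "?k \<le> y" if "\<exists>f. weak_IASI (complete_sun_V n) (complete_sun_E n) f \<and>
             card (mono_indexed_edges (complete_sun_E n) f) = y" for y
      using that lower_bound[OF assms] by blast
  qed
  thus ?thesis using arith_final[OF assms] by simp
qed

end
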